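(* Let $N\in\boldsymbol{\Pi}_{q,r}$. Let $x\in\mathbb{R}^q$ be nonzero and $y\in\mathbb{R}^r$ be such that $\begin{bmatrix}x\\ y\end{bmatrix}^\top N\begin{bmatrix}x\\ y\end{bmatrix}\ge 0$. Then there exists $Z\in\mathcal{Z}_r(N)$ such that $\begin{bmatrix}x\\ y\end{bmatrix}=\begin{bmatrix}I\\ Z\end{bmatrix}x$, i.e., $y=Zx$.
   Context: $\mathbb{S}^k$ denotes the real symmetric $k\times k$ matrices; for symmetric matrices, $A\ge 0$ means positive semidefinite. $A^\dagger$ is the Moore–Penrose pseudo-inverse. Any $N\in\mathbb{S}^{q+r}$ is partitioned as $N=\begin{bmatrix}N_{11}&N_{12}\\ N_{21}&N_{22}\end{bmatrix}$ with $N_{11}\in\mathbb{S}^q$, $N_{22}\in\mathbb{S}^r$. The generalized Schur complement is $N\mid N_{22}:=N_{11}-N_{12}N_{22}^\dagger N_{21}$. The set $\boldsymbol{\Pi}_{q,r}$ consists of all $N\in\mathbb{S}^{q+r}$ with $N_{22}\le 0$, $N\mid N_{22}\ge 0$ and $\ker N_{22}\subseteq\ker N_{12}$. Define $\mathcal{Z}_r(N)=\{Z\in\mathbb{R}^{r\times q}:\begin{bmatrix}I_q\\ Z\end{bmatrix}^\top N\begin{bmatrix}I_q\\ Z\end{bmatrix}\ge 0\}$. *)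

theory Defs
  imports "HOL-Analysis.Analysis"
begin

text \<open>Matrices in S^(q+r) are represented as real matrices indexed by the sum type
  'q + 'r; the block (1,1) corresponds to the Inl indices, block (2,2) to Inr indices.\<close>

definition sym_mat :: "real^'n^'n \<Rightarrow> bool" where
  "sym_mat A \<longleftrightarrow> transpose A = A"

definition psd :: "real^'n^'n \<Rightarrow> bool" where
  "psd A \<longleftrightarrow> sym_mat A \<and> (\<forall>v. 0 \<le> v \<bullet> (A *v v))"

definition pinv :: "real^'n^'m \<Rightarrow> real^'m^'n" where
  "pinv A = (THE X. A ** X ** A = A \<and> X ** A ** X = X \<and>
       transpose (A ** X) = A ** X \<and> transpose (X ** A) = X ** A)"

definition blk11 :: "real^('q::finite+'r::finite)^('q+'r) \<Rightarrow> real^'q^'q" where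
  "blk11 N = (\<chi> i j. N $ Inl i $ Inl j)"
definition blk12 :: "real^('q::finite+'r::finite)^('q+'r) \<Rightarrow> real^'r^'q" where
  "blk12 N = (\<chi> i j. N $ Inl i $ Inr j)"
definition blk21 :: "real^('q::finite+'r::finite)^('q+'r) \<Rightarrow> real^'q^'r" where
  "blk21 N = (\<chi> i j. N $ Inr i $ Inl j)"
definition blk22 :: "real^('q::finite+'r::finite)^('q+'r) \<Rightarrow> real^'r^'r" where
  "blk22 N = (\<chi> i j. N $ Inr i $ Inr j)"

definition schur_compl :: "real^('q::finite+'r::finite)^('q+'r) \<Rightarrow> real^'q^'q" where
  "schur_compl N = blk11 N - blk12 N ** pinv (blk22 N) ** blk21 N"

definition Pi_set :: "(real^('q::finite+'r::finite)^('q+'r)) set" where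
  "Pi_set = {N. sym_mat N \<and> psd (- blk22 N) \<and> psd (schur_compl N) \<and>
      (\<forall>v. blk22 N *v v = 0 \<longrightarrow> blk12 N *v v = 0)}"

definition vstack :: "real^'q \<Rightarrow> real^'r \<Rightarrow> real^('q+'r)" where
  "vstack x y = (\<chi> k. case k of Inl i \<Rightarrow> x $ i | Inr j \<Rightarrow> y $ j)"

definition IZ :: "real^'q^'r \<Rightarrow> real^'q^('q+'r)" where
  "IZ Z = (\<chi> k. case k of Inl i \<Rightarrow> mat 1 $ i | Inr j \<Rightarrow> Z $ j)"

definition Zset :: "real^('q::finite+'r::finite)^('q+'r) \<Rightarrow> (real^'q^'r) set" where
  "Zset N = {Z. psd (transpose (IZ Z) ** N ** IZ Z)}"

end

theory Submission
  imports Defs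
begin


definition pen :: "real^'n^'m \<Rightarrow> real^'m^'n \<Rightarrow> bool" where
  "pen A X \<longleftrightarrow> A ** X ** A = A \<and> X ** A ** X = X \<and>
       transpose (A ** X) = A ** X \<and> transpose (X ** A) = X ** A"

lemma pen_unique:
  assumes "pen A X" "pen A Y" shows "X = Y"
proof -
  from assms have a1: "A ** X ** A = A" "X ** A ** X = X" "transpose (A ** X) = A ** X" "transpose (X ** A) = X ** A"
    and b1: "A ** Y ** A = A" "Y ** A ** Y = Y" "transpose (A ** Y) = A ** Y" "transpose (Y ** A) = Y ** A"
    unfolding pen_def by auto
  have tA: "transpose A = transpose A ** transpose Y ** transpose A"
    by (metis b1(1) matrix_transpose_mul matrix_mul_assoc)
  have tA2: "transpose A = transpose A ** transpose X ** transpose A"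
    by (metis a1(1) matrix_transpose_mul matrix_mul_assoc)
  have AX: "transpose X ** transpose A = A ** X" by (metis a1(3) matrix_transpose_mul)
  have AY: "transpose Y ** transpose A = A ** Y" by (metis b1(3) matrix_transpose_mul)
  have XA: "transpose A ** transpose X = X ** A" by (metis a1(4) matrix_transpose_mul)
  have YA: "transpose A ** transpose Y = Y ** A" by (metis b1(4) matrix_transpose_mul)
  have "X = X ** (A ** X)" using a1(2) by (simp add: matrix_mul_assoc)
  also have "\<dots> = X ** (transpose X ** transpose A)" using AX by simp
  also have "\<dots> = X ** (transpose X ** (transpose A ** transpose Y ** transpose A))" using tA by simp
  also have "\<dots> = X ** (transpose X ** transpose A) ** (transpose Y ** transpose A)"
    by (simp add: matrix_mul_assoc)
  also have "\<dots> = X ** A ** X ** A ** Y" using AX AY by (simp add: matrix_mul_assoc)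
  also have "\<dots> = X ** A ** Y" using a1(2) by simp
  finally have X: "X = X ** A ** Y" .
  have "Y = (Y ** A) ** Y" using b1(2) by (simp add: matrix_mul_assoc)
  also have "\<dots> = (transpose A ** transpose Y) ** Y" using YA by simp
  also have "\<dots> = (transpose A ** transpose X ** transpose A) ** transpose Y ** Y" using tA2 by simp
  also have "\<dots> = (transpose A ** transpose X) ** (transpose A ** transpose Y) ** Y"
    by (simp add: matrix_mul_assoc)
  also have "\<dots> = X ** A ** (Y ** A ** Y)" using XA YA by (simp add: matrix_mul_assoc)
  also have "\<dots> = X ** A ** Y" using b1(2) by simp
  finally show ?thesis using X by simp
qed

lemma inner_mat: "(M *v a) \<bullet> (b::real^'n) = a \<bullet> (transpose M *v b)"
  by (simp add: inner_vec_def matrix_vector_mult_def transpose_def sum_distrib_left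
      sum_distrib_right mult.commute mult.left_commute) (rule sum.swap)

lemma sym_inner: "sym_mat C \<Longrightarrow> (C *v a) \<bullet> b = a \<bullet> (C *v b)"
  by (simp add: inner_mat sym_mat_def)

lemma vec_eq_by_inner: "(\<And>b. (u::real^'n) \<bullet> b = w \<bullet> b) \<Longrightarrow> u = w"
  by (metis inner_diff_left eq_iff_diff_eq_0 inner_eq_zero_iff)

lemma sym_mat_from_map:
  fixes M :: "real^'n^'n"
  assumes "\<And>u. M *v u = p u" "\<And>u w. p u \<bullet> w = u \<bullet> p w"
  shows "transpose M = M"
proof -
  have "transpose M *v a = M *v a" for a
  proof (rule vec_eq_by_inner)
    fix b
    have "(transpose M *v a) \<bullet> b = a \<bullet> (M *v b)" using inner_mat[of "transpose M" a b] by (simp only: transpose_transpose)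
    also have "\<dots> = (M *v a) \<bullet> b" using assms by simp
    finally show "(transpose M *v a) \<bullet> b = (M *v a) \<bullet> b" .
  qed
  then show ?thesis by (simp add: matrix_eq)
qed

lemma pen_exists:
  fixes C :: "real^'n^'n"
  assumes sC: "sym_mat C"
  shows "\<exists>X. pen C X"
proof -
  let ?f = "\<lambda>u. C *v u"
  define V where "V = range ?f"
  have linf: "linear ?f" by (rule matrix_vector_mul_linear)
  have subV: "subspace V" unfolding V_def by (metis linf linear_subspace_image subspace_UNIV)
  obtain B where B: "B \<subseteq> V" "pairwise orthogonal B" "\<And>x. x \<in> B \<Longrightarrow> norm x = 1"
    "independent B" "span B = V"
    using orthonormal_basis_subspace[OF subV] by metis
  have finB: "finite B" using B(4) by (simp add: independent_imp_finite)
  define P where "P u = (\<Sum>b\<in>B. (u \<bullet> b) *\<^sub>R b)" for u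
  have PV: "P u \<in> V" for u
    unfolding P_def B(5)[symmetric] by (intro span_sum span_scale span_base)
  have Pid: "v \<in> V \<Longrightarrow> P v = v" for v
    unfolding P_def using orthonormal_basis_expand[OF B(2) B(3) _ finB] B(5) by auto
  have Psym: "P u \<bullet> w = u \<bullet> P w" for u w
    unfolding P_def by (simp add: inner_sum_left inner_sum_right mult.commute inner_commute)
  have linP: "linear P"
    by (rule linearI) (simp_all add: P_def inner_add_left scaleR_add_left sum.distrib scaleR_sum_right)
  have CP: "C *v P u = C *v u" for u
  proof -
    let ?d = "u - P u"
    have "(C *v ?d) \<bullet> z = 0" for z
    proof -
      have "(C *v ?d) \<bullet> z = ?d \<bullet> (C *v z)" using sym_inner[OF sC] by simp
      also have "\<dots> = u \<bullet> (C *v z) - u \<bullet> P (C *v z)" by (simp add: inner_diff_left Psym)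
      also have "\<dots> = 0" using Pid[of "C *v z"] by (simp add: V_def)
      finally show ?thesis .
    qed
    then have "C *v ?d = 0" by (metis inner_eq_zero_iff)
    then show ?thesis by (simp add: matrix_vector_mult_diff_distrib)
  qed
  have inj: "inj_on ?f V"
  proof (rule inj_onI)
    fix v1 v2 assume v: "v1 \<in> V" "v2 \<in> V" "C *v v1 = C *v v2"
    then obtain t where t: "v1 - v2 = C *v t" unfolding V_def
      by (metis (no_types, lifting) imageE V_def subV subspace_diff)
    have Cd: "C *v (v1 - v2) = 0" using v(3) by (simp add: matrix_vector_mult_diff_distrib)
    have "(v1 - v2) \<bullet> (v1 - v2) = t \<bullet> (C *v (v1 - v2))"
      using sym_inner[OF sC, of t "v1 - v2"] t by simp
    then have "(v1 - v2) \<bullet> (v1 - v2) = 0" using Cd by simp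
    then show "v1 = v2" by simp
  qed
  obtain g where g: "range g \<subseteq> V" "linear g" "\<And>v. v \<in> V \<Longrightarrow> g (C *v v) = v"
    using real_vector.linear_exists_left_inverse_on[OF linf subV inj] by blast
  define G where "G = matrix (g \<circ> P)"
  have Gv: "G *v u = g (P u)" for u
    unfolding G_def using matrix_vector_mul(2)[OF linear_compose[OF linP g(2)]] by (simp add: o_def)
  have GC: "G *v (C *v u) = P u" for u
  proof -
    have "G *v (C *v u) = g (C *v u)" using Gv Pid[of "C *v u"] by (simp add: V_def)
    also have "\<dots> = g (C *v P u)" by (simp add: CP)
    also have "\<dots> = P u" using g(3) PV by simp
    finally show ?thesis .
  qed
  have CG: "C *v (G *v u) = P u" for u
  proof -
    obtain w where w: "P u = C *v w" using PV[of u] unfolding V_def by auto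
    have "C *v (G *v u) = C *v g (C *v P w)" using Gv w CP by simp
    also have "\<dots> = C *v P w" using g(3) PV by simp
    also have "\<dots> = P u" using w CP by simp
    finally show ?thesis .
  qed
  have "pen C G" unfolding pen_def
  proof (intro conjI)
    show "C ** G ** C = C" by (simp add: matrix_eq matrix_vector_mul_assoc[symmetric] GC CP)
    have "G *v (C *v (G *v u)) = G *v u" for u
    proof -
      have "G *v u \<in> V" using Gv g(1) by auto
      then show ?thesis by (simp only: GC Pid)
    qed
    then show "G ** C ** G = G"
      by (simp add: matrix_eq matrix_vector_mul_assoc[symmetric])
    show "transpose (C ** G) = C ** G"
      by (rule sym_mat_from_map[where p=P]) (simp_all add: matrix_vector_mul_assoc[symmetric] CG Psym)
    show "transpose (G ** C) = G ** C"
      by (rule sym_mat_from_map[where p=P]) (simp_all add: matrix_vector_mul_assoc[symmetric] GC Psym)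
  qed
  then show ?thesis by blast
qed

lemma pen_transpose:
  assumes "sym_mat C" "pen C X" shows "pen C (transpose X)"
proof -
  have tC: "transpose C = C" using assms(1) by (simp add: sym_mat_def)
  from assms(2) have a1: "C ** X ** C = C" "X ** C ** X = X" "transpose (C ** X) = C ** X" "transpose (X ** C) = X ** C"
    unfolding pen_def by auto
  show ?thesis unfolding pen_def
  proof (intro conjI)
    show "C ** transpose X ** C = C" by (metis a1(1) tC matrix_transpose_mul matrix_mul_assoc)
    show "transpose X ** C ** transpose X = transpose X" by (metis a1(2) tC matrix_transpose_mul matrix_mul_assoc)
    show "transpose (C ** transpose X) = C ** transpose X"
      by (metis a1(4) tC matrix_transpose_mul transpose_transpose)
    show "transpose (transpose X ** C) = transpose X ** C"
      by (metis a1(3) tC matrix_transpose_mul transpose_transpose)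
  qed
qed

lemma pinv_sym:
  fixes C :: "real^'n^'n"
  assumes "sym_mat C"
  shows "pen C (pinv C)" "transpose (pinv C) = pinv C"
proof -
  obtain X where X: "pen C X" using pen_exists[OF assms] by blast
  have "pinv C = X" unfolding pinv_def
    by (rule the_equality) (use X pen_unique in \<open>auto simp: pen_def\<close>)
  then show "pen C (pinv C)" using X by simp
  show "transpose (pinv C) = pinv C"
    using pen_unique[OF pen_transpose[OF assms X] X] \<open>pinv C = X\<close> by simp
qed



lemma sum_Plus_UNIV: "(\<Sum>k\<in>(UNIV::('a::finite+'b::finite) set). f k) = (\<Sum>i\<in>UNIV. f (Inl i)) + (\<Sum>j\<in>UNIV. f (Inr j))"
proof -
  have e: "(UNIV::('a+'b) set) = range Inl \<union> range Inr" by (metis UNIV_Plus_UNIV Plus_def)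
  have "sum f UNIV = sum f (range Inl) + sum f (range Inr)"
    unfolding e by (rule sum.union_disjoint) auto
  also have "\<dots> = (\<Sum>i\<in>UNIV. f (Inl i)) + (\<Sum>j\<in>UNIV. f (Inr j))"
    by (simp add: sum.reindex)
  finally show ?thesis .
qed

lemma IZ_mult: "IZ Z *v x = vstack x (Z *v x)"
  apply (auto simp: vec_eq_iff IZ_def vstack_def matrix_vector_mult_def mat_def split: sum.split)
  subgoal for i
  proof -
    have "(\<Sum>j\<in>UNIV. (if i = j then 1 else 0) * x $ j) = (\<Sum>j\<in>UNIV. if i = j then x$j else 0)"
      by (rule sum.cong) auto
    also have "\<dots> = x $ i" by simp
    finally show ?thesis .
  qed
  done


lemma vstack_inner: "vstack a b \<bullet> vstack c d = a \<bullet> c + b \<bullet> d"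
  by (simp add: inner_vec_def sum_Plus_UNIV vstack_def)

lemma N_vstack: "N *v vstack x y = vstack (blk11 N *v x + blk12 N *v y) (blk21 N *v x + blk22 N *v y)"
  by (auto simp: vec_eq_iff matrix_vector_mult_def vstack_def blk11_def blk12_def blk21_def blk22_def
     sum_Plus_UNIV split: sum.split)

lemma sym_entry: "sym_mat N \<Longrightarrow> N $ b $ a = N $ a $ b"
proof -
  assume "sym_mat N"
  then have "(\<chi> i j. N$j$i) $ a $ b = N $ a $ b" unfolding sym_mat_def transpose_def by simp
  thus ?thesis by simp
qed

lemma blk21_sym: "sym_mat N \<Longrightarrow> blk21 N = transpose (blk12 N)"
  unfolding vec_eq_iff blk21_def blk12_def transpose_def
  by (metis (no_types) sym_entry vec_lambda_beta)

lemma blk22_sym: "sym_mat N \<Longrightarrow> sym_mat (blk22 N)"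
  unfolding sym_mat_def vec_eq_iff blk22_def transpose_def
  by (metis (no_types) sym_entry vec_lambda_beta)

lemma inner_mat2: "(a::real^'n) \<bullet> (M *v b) = (transpose M *v a) \<bullet> b"
  using inner_mat[of M b a] by (simp only: inner_commute)

lemma neg_mult: "(- C) *v (w::real^'n) = - (C *v w)"
  by (simp add: vec_eq_iff matrix_vector_mult_def sum_negf)

theorem mainTheorem6:
  fixes N :: "real^('q::finite+'r::finite)^('q+'r)" and x :: "real^'q" and y :: "real^'r"
  assumes "N \<in> Pi_set"
    and "x \<noteq> 0"
    and "0 \<le> vstack x y \<bullet> (N *v vstack x y)"
  shows "\<exists>Z \<in> Zset N. vstack x y = IZ Z *v x"
proof -
  define A where "A = blk11 N"
  define B where "B = blk12 N"
  define Bt where "Bt = blk21 N"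
  define C where "C = blk22 N"
  define G where "G = pinv C"
  define S where "S = schur_compl N"
  have sN: "sym_mat N" and psdC: "psd (- C)" and psdS: "psd S"
    and ker: "\<And>v. C *v v = 0 \<Longrightarrow> B *v v = 0"
    using assms(1) unfolding Pi_set_def C_def S_def B_def by auto
  have Bt: "Bt = transpose B" unfolding Bt_def B_def by (rule blk21_sym[OF sN])
  have sC: "sym_mat C" unfolding C_def by (rule blk22_sym[OF sN])
  have penG: "pen C G" and tG: "transpose G = G" unfolding G_def using pinv_sym[OF sC] by auto
  have tC: "transpose C = C" using sC by (simp add: sym_mat_def)
  have SA: "S = A - B ** G ** Bt" unfolding S_def schur_compl_def A_def B_def G_def C_def Bt_def ..
  have sS: "sym_mat S" using psdS by (simp add: psd_def)
  have F: "vstack v w \<bullet> (N *v vstack v w) = v \<bullet> (A *v v) + 2 * (v \<bullet> (B *v w)) + w \<bullet> (C *v w)" for v w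
  proof -
    have "w \<bullet> (Bt *v v) = v \<bullet> (B *v w)" by (simp add: Bt inner_mat2 inner_commute)
    then show ?thesis
      by (simp add: N_vstack vstack_inner inner_add_right A_def B_def C_def Bt_def[symmetric])
  qed
  have BGC: "B ** G ** C = B"
  proof -
    have "B *v (G *v (C *v u)) = B *v u" for u
    proof -
      have "C *v (u - G *v (C *v u)) = C *v u - (C ** G ** C) *v u"
        by (simp add: matrix_vector_mult_diff_distrib matrix_vector_mul_assoc matrix_mul_assoc)
      also have "\<dots> = 0" using penG by (simp add: pen_def)
      finally have "B *v (u - G *v (C *v u)) = 0" by (rule ker)
      then show ?thesis by (simp add: matrix_vector_mult_diff_distrib)
    qed
    then show ?thesis by (simp add: matrix_eq matrix_vector_mul_assoc[symmetric])
  qed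
  have CGBt: "C ** G ** Bt = Bt"
    using arg_cong[OF BGC, of transpose] by (simp add: matrix_transpose_mul tC tG Bt matrix_mul_assoc)
  define h where "h v = G *v (Bt *v v)" for v
  have Ch: "C *v h v = Bt *v v" for v
    unfolding h_def using CGBt by (simp add: matrix_vector_mul_assoc matrix_mul_assoc)
  have Id: "vstack v w \<bullet> (N *v vstack v w) = v \<bullet> (S *v v) + (w + h v) \<bullet> (C *v (w + h v))" for v w
  proof -
    have e1: "w \<bullet> (C *v h v) = v \<bullet> (B *v w)" by (simp add: Ch Bt inner_mat2 inner_commute)
    have e2: "h v \<bullet> (C *v w) = v \<bullet> (B *v w)" using e1 sym_inner[OF sC, of "h v" w] 
      by (simp add: inner_commute)
    have e3: "h v \<bullet> (C *v h v) = v \<bullet> (B *v h v)" by (simp add: Ch Bt inner_mat2 inner_commute)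
    have e4: "v \<bullet> (S *v v) = v \<bullet> (A *v v) - v \<bullet> (B *v h v)"
      by (simp add: SA h_def matrix_vector_mult_diff_rdistrib inner_diff_right matrix_vector_mul_assoc matrix_mul_assoc)
    show ?thesis unfolding F
      by (simp add: matrix_vector_right_distrib inner_add_left inner_add_right e1 e2 e3 e4)
  qed
  define w0 where "w0 = y + h x"
  define s where "s = x \<bullet> (S *v x)"
  define c where "c = w0 \<bullet> (C *v w0)"
  have s0: "0 \<le> s" using psdS by (simp add: psd_def s_def)
  have Cneg: "w \<bullet> (C *v w) \<le> 0" for w
    using psdC by (simp add: psd_def neg_mult)
  have c0: "c \<le> 0" unfolding c_def by (rule Cneg)
  have sc: "0 \<le> s + c" using assms(3) Id[of x y] by (simp add: s_def c_def w0_def)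
  obtain u where u1: "u \<bullet> x = 1" and uq: "\<And>v. 0 \<le> v \<bullet> (S *v v) + (u \<bullet> v)^2 * c"
  proof (cases "s = 0")
    case True
    then have "c = 0" using sc c0 by simp
    moreover have "(x /\<^sub>R (x \<bullet> x)) \<bullet> x = 1" using assms(2) by simp
    moreover have "0 \<le> v \<bullet> (S *v v)" for v using psdS unfolding psd_def by blast
    ultimately show ?thesis by (intro that[of "x /\<^sub>R (x \<bullet> x)"]) simp_all
  next
    case False
    then have sp: "s > 0" using s0 by simp
    let ?u = "(S *v x) /\<^sub>R s"
    have "?u \<bullet> x = 1" using sp sym_inner[OF sS, of x x] by (simp add: s_def)
    moreover have "0 \<le> v \<bullet> (S *v v) + (?u \<bullet> v)^2 * c" for v
    proof -
      define m where "m = x \<bullet> (S *v v)"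
      have um: "?u \<bullet> v = m / s" using sym_inner[OF sS, of x v] by (simp add: m_def divide_inverse mult.commute)
      define t where "t = m / s"
      have vx: "v \<bullet> (S *v x) = m" using sym_inner[OF sS, of x v] by (simp add: m_def inner_commute)
      have "0 \<le> (v - t *\<^sub>R x) \<bullet> (S *v (v - t *\<^sub>R x))" using psdS by (simp add: psd_def)
      also have "\<dots> = v \<bullet> (S *v v) - 2 * t * m + t^2 * s"
      proof -
        have e: "S *v (v - t *\<^sub>R x) = S *v v - t *\<^sub>R (S *v x)"
          by (simp add: matrix_vector_mult_diff_distrib matrix_vector_mult_scaleR)
        have "(v - t *\<^sub>R x) \<bullet> (S *v v - t *\<^sub>R (S *v x))
            = v \<bullet> (S *v v) - t * (v \<bullet> (S *v x)) - t * (x \<bullet> (S *v v)) + t * (t * (x \<bullet> (S *v x)))"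
          by (simp add: inner_diff_left inner_diff_right algebra_simps)
        also have "\<dots> = v \<bullet> (S *v v) - 2 * t * m + t^2 * s"
          unfolding vx m_def[symmetric] s_def[symmetric] by (simp add: power2_eq_square)
        finally show ?thesis using e by simp
      qed
      also have "\<dots> = v \<bullet> (S *v v) - t^2 * s" using sp by (simp add: t_def power2_eq_square field_simps)
      finally have q: "0 \<le> v \<bullet> (S *v v) - t^2 * s" .
      have "t^2 * (-s) \<le> t^2 * c" using sc by (intro mult_left_mono) auto
      then show ?thesis using q um t_def by simp
    qed
    ultimately show ?thesis using that by blast
  qed
  define zf where "zf v = (u \<bullet> v) *\<^sub>R w0 - h v" for v
  have linz: "linear zf"
    by (rule linearI) (simp_all add: zf_def h_def inner_add_right matrix_vector_right_distrib
        matrix_vector_mult_scaleR scaleR_add_left algebra_simps)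
  define Z where "Z = matrix zf"
  have Zv: "Z *v v = zf v" for v unfolding Z_def using matrix_vector_mul(2)[OF linz] by simp
  have Zx: "Z *v x = y" using u1 by (simp add: Zv zf_def w0_def)
  have "Z \<in> Zset N"
    unfolding Zset_def psd_def mem_Collect_eq
  proof (intro conjI allI)
    show "sym_mat (transpose (IZ Z) ** N ** IZ Z)"
      using sN by (simp add: sym_mat_def matrix_transpose_mul matrix_mul_assoc)
    fix v
    have "v \<bullet> ((transpose (IZ Z) ** N ** IZ Z) *v v) = (IZ Z *v v) \<bullet> (N *v (IZ Z *v v))"
    proof -
      have "(transpose (IZ Z) ** N ** IZ Z) *v v = transpose (IZ Z) *v (N *v (IZ Z *v v))"
        by (simp add: matrix_vector_mul_assoc matrix_mul_assoc)
      then show ?thesis by (simp only: inner_mat)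
    qed
    also have "\<dots> = v \<bullet> (S *v v) + (u \<bullet> v)^2 * c"
    proof -
      have a: "IZ Z *v v = vstack v (zf v)" by (simp add: IZ_mult Zv)
      have b: "zf v + h v = (u \<bullet> v) *\<^sub>R w0" by (simp add: zf_def)
      have d: "((u \<bullet> v) *\<^sub>R w0) \<bullet> (C *v ((u \<bullet> v) *\<^sub>R w0)) = (u \<bullet> v)^2 * c"
        by (simp add: matrix_vector_mult_scaleR c_def power2_eq_square)
      show ?thesis unfolding a Id b d ..
    qed
    finally show "0 \<le> v \<bullet> ((transpose (IZ Z) ** N ** IZ Z) *v v)" using uq[of v] by linarith
  qed
  moreover have "vstack x y = IZ Z *v x" by (simp add: IZ_mult Zx)
  ultimately show ?thesis by blast
qed

end
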